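(* Let $\Phi$ be a finite crystallographic root system with Weyl group $W$ and let $\beta,\gamma\in\Phi^+$. Then $|W^{(++)}(\beta,\gamma)|=|W^{(--)}(\beta,\gamma)|$ and $|W^{(+-)}(\beta,\gamma)|=|W^{(-+)}(\beta,\gamma)|$. If moreover $\beta\ne\gamma$, then $|W^{(++)}(\beta,\gamma)|=(\operatorname{ord}(\beta,\gamma)-1)\cdot|W^{(+-)}(\beta,\gamma)|$ if $\langle\beta,\gamma\rangle\ge0$, and $|W^{(+-)}(\beta,\gamma)|=(\operatorname{ord}(\beta,\gamma)-1)\cdot|W^{(++)}(\beta,\gamma)|$ if $\langle\beta,\gamma\rangle\le0$. In particular, all four sets $W^{(++)},W^{(--)},W^{(+-)},W^{(-+)}$ have equal cardinality if and only if $\beta$ and $\gamma$ are orthogonal.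
   Context: $\Phi\subset V$ is a finite crystallographic root system in a Euclidean space with inner product $\langle\cdot,\cdot\rangle$, positive roots $\Phi^+$, negative roots $\Phi^-=-\Phi^+$. For signs $\varepsilon,\delta\in\{+,-\}$, $W^{(\varepsilon\delta)}(\beta,\gamma)=\{w\in W : \varepsilon\cdot w(\beta)\in\Phi^+,\ \delta\cdot w(\gamma)\in\Phi^+\}$. $\operatorname{ord}(\beta,\gamma)=\min\{k>0:(s_\beta s_\gamma)^k=e\}$ where $s_\beta$ is the reflection in $\beta$. *)

theory Defs
  imports "HOL-Analysis.Analysis"
begin

definition refl :: "'a::euclidean_space \<Rightarrow> 'a \<Rightarrow> 'a" where
  "refl \<alpha> x = x - ((2 * (x \<bullet> \<alpha>)) / (\<alpha> \<bullet> \<alpha>)) *\<^sub>R \<alpha>"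

definition root_system :: "'a::euclidean_space set \<Rightarrow> bool" where
  "root_system \<Phi> \<longleftrightarrow>
     finite \<Phi> \<and> 0 \<notin> \<Phi> \<and>
     (\<forall>\<alpha>\<in>\<Phi>. refl \<alpha> ` \<Phi> = \<Phi>) \<and>
     (\<forall>\<alpha>\<in>\<Phi>. \<forall>\<beta>\<in>\<Phi>. 2 * (\<beta> \<bullet> \<alpha>) / (\<alpha> \<bullet> \<alpha>) \<in> \<int>) \<and>
     (\<forall>\<alpha>\<in>\<Phi>. \<forall>c::real. c *\<^sub>R \<alpha> \<in> \<Phi> \<longrightarrow> c = 1 \<or> c = -1)"

definition positive_system :: "'a::euclidean_space set \<Rightarrow> 'a set \<Rightarrow> bool" where
  "positive_system \<Phi> P \<longleftrightarrow>
     (\<exists>v. (\<forall>\<alpha>\<in>\<Phi>. \<alpha> \<bullet> v \<noteq> 0) \<and> P = {\<alpha>\<in>\<Phi>. \<alpha> \<bullet> v > 0})"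

inductive_set weyl_group :: "'a::euclidean_space set \<Rightarrow> ('a \<Rightarrow> 'a) set"
  for \<Phi> :: "'a set" where
  weyl_id: "id \<in> weyl_group \<Phi>"
| weyl_step: "\<alpha> \<in> \<Phi> \<Longrightarrow> w \<in> weyl_group \<Phi> \<Longrightarrow> refl \<alpha> \<circ> w \<in> weyl_group \<Phi>"

text \<open>W^(\<epsilon>\<delta>)(\<beta>,\<gamma>); signs encoded as booleans (True = +).\<close>
definition Wsgn :: "'a::euclidean_space set \<Rightarrow> 'a set \<Rightarrow> bool \<Rightarrow> bool \<Rightarrow> 'a \<Rightarrow> 'a \<Rightarrow> ('a \<Rightarrow> 'a) set" where
  "Wsgn \<Phi> P \<epsilon> \<delta> \<beta> \<gamma> =
     {w \<in> weyl_group \<Phi>. (if \<epsilon> then w \<beta> else - w \<beta>) \<in> P \<and> (if \<delta> then w \<gamma> else - w \<gamma>) \<in> P}"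

definition ord_refl :: "'a::euclidean_space \<Rightarrow> 'a \<Rightarrow> nat" where
  "ord_refl \<beta> \<gamma> = (LEAST k. k > 0 \<and> (refl \<beta> \<circ> refl \<gamma>) ^^ k = id)"

end

theory Submission
  imports Defs
begin


lemma refl_linear: "linear (refl a)"
  unfolding refl_def by (intro linearI) (auto simp: inner_add_left algebra_simps add_divide_distrib scaleR_add_left)

lemma refl_inner: "a \<noteq> 0 \<Longrightarrow> refl a x \<bullet> refl a y = x \<bullet> y"
  unfolding refl_def
  by (simp add: inner_diff_left inner_diff_right inner_commute field_simps power2_eq_square)

lemma refl_invol: assumes a: "a \<noteq> 0" shows "refl a (refl a x) = x"
proof -
  define t where "t = 2 * (x \<bullet> a) / (a \<bullet> a)"
  have aa: "a \<bullet> a \<noteq> 0" using a by simp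
  have r1: "refl a x = x - t *\<^sub>R a" by (simp add: refl_def t_def)
  have "(x - t *\<^sub>R a) \<bullet> a = - (x \<bullet> a)"
    using aa by (simp add: inner_diff_left t_def field_simps)
  then have "refl a (x - t *\<^sub>R a) = x - t *\<^sub>R a + t *\<^sub>R a"
    unfolding refl_def by (simp add: t_def)
  then show ?thesis using r1 by simp
qed

lemma refl_self: "a \<noteq> 0 \<Longrightarrow> refl a a = - a"
  unfolding refl_def by (simp add: scaleR_2)

lemma rs_fin: "root_system \<Phi> \<Longrightarrow> finite \<Phi>" and rs_0: "root_system \<Phi> \<Longrightarrow> 0 \<notin> \<Phi>"
  and rs_refl: "root_system \<Phi> \<Longrightarrow> a \<in> \<Phi> \<Longrightarrow> refl a ` \<Phi> = \<Phi>"
  and rs_int: "root_system \<Phi> \<Longrightarrow> a \<in> \<Phi> \<Longrightarrow> b \<in> \<Phi> \<Longrightarrow> 2 * (b \<bullet> a) / (a \<bullet> a) \<in> \<int>"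
  and rs_red: "root_system \<Phi> \<Longrightarrow> a \<in> \<Phi> \<Longrightarrow> c *\<^sub>R a \<in> \<Phi> \<Longrightarrow> c = 1 \<or> c = -1"
  unfolding root_system_def by blast+

lemma rs_neg: "root_system \<Phi> \<Longrightarrow> a \<in> \<Phi> \<Longrightarrow> - a \<in> \<Phi>"
proof -
  assume r: "root_system \<Phi>" and a: "a \<in> \<Phi>"
  then have "a \<noteq> 0" using rs_0 by blast
  then have "-a = refl a a" by (simp add: refl_self)
  also have "\<dots> \<in> refl a ` \<Phi>" using a by blast
  finally show ?thesis using rs_refl[OF r a] by simp
qed

lemma weyl_comp: "w1 \<in> weyl_group \<Phi> \<Longrightarrow> w2 \<in> weyl_group \<Phi> \<Longrightarrow> w1 \<circ> w2 \<in> weyl_group \<Phi>"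
  by (induction w1 rule: weyl_group.induct) (auto simp: comp_assoc intro: weyl_group.intros)

lemma refl_in_weyl: "a \<in> \<Phi> \<Longrightarrow> refl a \<in> weyl_group \<Phi>"
  using weyl_group.weyl_step[OF _ weyl_group.weyl_id] by fastforce

lemma weyl_inv: assumes r: "root_system \<Phi>" and w: "w \<in> weyl_group \<Phi>"
  shows "\<exists>w'\<in>weyl_group \<Phi>. w' \<circ> w = id \<and> w \<circ> w' = id"
  using w proof (induction w rule: weyl_group.induct)
  case weyl_id
  have "id \<in> weyl_group \<Phi>" by (rule weyl_group.weyl_id)
  moreover have "id \<circ> id = (id :: 'a \<Rightarrow> 'a)" by simp
  ultimately show ?case by blast
next
  case (weyl_step a w)
  then obtain w' where w': "w' \<in> weyl_group \<Phi>" "w' \<circ> w = id" "w \<circ> w' = id" by blast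
  have a0: "a \<noteq> 0" using weyl_step rs_0[OF r] by blast
  have ii: "refl a \<circ> refl a = id" using refl_invol[OF a0] by auto
  have "w' \<circ> refl a \<in> weyl_group \<Phi>" using weyl_comp[OF w'(1) refl_in_weyl[OF weyl_step(1)]] .
  moreover have "(w' \<circ> refl a) \<circ> (refl a \<circ> w) = id"
    by (metis comp_assoc ii w'(2) comp_id)
  moreover have "(refl a \<circ> w) \<circ> (w' \<circ> refl a) = id"
    by (metis comp_assoc ii w'(3) comp_id)
  ultimately show ?case by blast
qed

lemma weyl_linear: "w \<in> weyl_group \<Phi> \<Longrightarrow> linear w"
proof (induction w rule: weyl_group.induct)
  case weyl_id show ?case by (rule linear_id)
next
  case (weyl_step a w) then show ?case using linear_compose[OF _ refl_linear] by blast
qed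

lemma weyl_inner: assumes z: "0 \<notin> \<Phi>" and w: "w \<in> weyl_group \<Phi>" shows "w x \<bullet> w y = x \<bullet> y"
  using w
proof (induction w arbitrary: x y rule: weyl_group.induct)
  case weyl_id show ?case by simp
next
  case (weyl_step a w)
  have "a \<noteq> 0" using z weyl_step by blast
  then show ?case using weyl_step by (simp add: refl_inner)
qed

lemma weyl_perm: assumes r: "root_system \<Phi>" and w: "w \<in> weyl_group \<Phi>" shows "w ` \<Phi> = \<Phi>"
  using w
proof (induction w rule: weyl_group.induct)
  case weyl_id show ?case by simp
next
  case (weyl_step a w)
  have "(refl a \<circ> w) ` \<Phi> = refl a ` (w ` \<Phi>)" by (simp add: image_comp)
  then show ?case using weyl_step rs_refl[OF r] by simp
qed

lemma weyl_span: "w \<in> weyl_group \<Phi> \<Longrightarrow> w x - x \<in> span \<Phi>"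
proof (induction w rule: weyl_group.induct)
  case weyl_id then show ?case by (simp add: span_zero)
next
  case (weyl_step a w)
  have "(refl a \<circ> w) x - x = (w x - x) - ((2 * (w x \<bullet> a)) / (a \<bullet> a)) *\<^sub>R a"
    by (simp add: refl_def)
  moreover have "((2 * (w x \<bullet> a)) / (a \<bullet> a)) *\<^sub>R a \<in> span \<Phi>"
    using weyl_step by (simp add: span_scale span_base)
  ultimately show ?case using weyl_step by (metis span_diff)
qed

lemma weyl_finite: assumes r: "root_system \<Phi>" shows "finite (weyl_group \<Phi>)"
proof (rule inj_on_finite[where f = "\<lambda>w. restrict w \<Phi>" and B = "\<Phi> \<rightarrow>\<^sub>E \<Phi>"])
  show "inj_on (\<lambda>w. restrict w \<Phi>) (weyl_group \<Phi>)"
  proof (rule inj_onI)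
    fix w1 w2 assume w1: "w1 \<in> weyl_group \<Phi>" and w2: "w2 \<in> weyl_group \<Phi>"
      and eq: "restrict w1 \<Phi> = restrict w2 \<Phi>"
    have eqa: "w1 a = w2 a" if "a \<in> \<Phi>" for a using eq that by (metis restrict_apply')
    have z: "0 \<notin> \<Phi>" using rs_0[OF r] .
    show "w1 = w2"
    proof
      fix x
      let ?y = "w1 x - w2 x"
      have sp: "?y \<in> span \<Phi>"
      proof -
        have "?y = (w1 x - x) - (w2 x - x)" by simp
        then show ?thesis using weyl_span[OF w1] weyl_span[OF w2] by (metis span_diff)
      qed
      have orth: "orthogonal ?y a" if a: "a \<in> \<Phi>" for a
      proof -
        obtain a' where a': "a' \<in> \<Phi>" "a = w1 a'" using weyl_perm[OF r w1] a by blast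
        have "?y \<bullet> a = w1 x \<bullet> w1 a' - w2 x \<bullet> w2 a'" using a' eqa by (simp add: inner_diff_left)
        also have "\<dots> = 0" using weyl_inner[OF z w1] weyl_inner[OF z w2] by simp
        finally show ?thesis by (simp add: orthogonal_def)
      qed
      have "orthogonal ?y ?y" using orthogonal_to_span[OF sp orth] .
      then show "w1 x = w2 x" by (simp add: orthogonal_def)
    qed
  qed
  show "(\<lambda>w. restrict w \<Phi>) ` weyl_group \<Phi> \<subseteq> \<Phi> \<rightarrow>\<^sub>E \<Phi>"
    using weyl_perm[OF r] by (auto simp: PiE_iff image_subset_iff)
  show "finite (\<Phi> \<rightarrow>\<^sub>E \<Phi>)" using rs_fin[OF r] by (simp add: finite_PiE)
qed


definition sbF :: "real \<Rightarrow> real \<Rightarrow> real \<times> real \<Rightarrow> real \<times> real" where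
  "sbF a d pq = (- fst pq - a - d * snd pq, snd pq)"
definition sgF :: "real \<Rightarrow> real \<Rightarrow> real \<times> real \<Rightarrow> real \<times> real" where
  "sgF b c pq = (fst pq, - snd pq - b - c * fst pq)"

definition wcf :: "real \<Rightarrow> real \<Rightarrow> real \<Rightarrow> real \<Rightarrow> bool list \<Rightarrow> real \<times> real \<Rightarrow> real \<times> real" where
  "wcf a b c d ws pq = foldr (\<lambda>t pq. if t then sbF a d pq else sgF b c pq) ws pq"

definition wmap :: "'a::euclidean_space \<Rightarrow> 'a \<Rightarrow> bool list \<Rightarrow> 'a \<Rightarrow> 'a" where
  "wmap be ga ws = foldr (\<lambda>t f. (if t then refl be else refl ga) \<circ> f) ws id"

fun alt :: "bool \<Rightarrow> nat \<Rightarrow> bool list" where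
  "alt t 0 = []"
| "alt t (Suc n) = t # alt (\<not> t) n"

definition dih :: "nat \<Rightarrow> bool list list" where
  "dih m = map (alt True) [0..<m] @ map (alt False) [1..<Suc m]"

definition rw :: "nat \<Rightarrow> bool list" where
  "rw k = concat (replicate k [True, False])"

definition sg :: "bool \<Rightarrow> real \<Rightarrow> bool" where
  "sg e x = (if e then x > 0 else x < 0)"

definition form :: "real \<Rightarrow> real \<Rightarrow> real \<Rightarrow> real \<Rightarrow> real \<times> real \<Rightarrow> bool list \<Rightarrow> real" where
  "form c d A B pq ws = fst (wcf 0 0 c d ws pq) * A + snd (wcf 0 0 c d ws pq) * B"

definition cnt :: "nat \<Rightarrow> real \<Rightarrow> real \<Rightarrow> real \<Rightarrow> real \<Rightarrow> bool \<Rightarrow> bool \<Rightarrow> nat" where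
  "cnt m c d A B e f = length (filter (\<lambda>ws. sg e (form c d A B (1,0) ws) \<and> sg f (form c d A B (0,1) ws)) (dih m))"

lemma wcf_Nil: "wcf a b c d [] pq = pq" by (simp add: wcf_def)
lemma wcf_T: "wcf a b c d (True # ws) pq = (let r = wcf a b c d ws pq in (- fst r - a - d * snd r, snd r))"
  by (simp add: wcf_def sbF_def Let_def)
lemma wcf_F: "wcf a b c d (False # ws) pq = (let r = wcf a b c d ws pq in (fst r, - snd r - b - c * fst r))"
  by (simp add: wcf_def sgF_def Let_def)

lemma wcf_lin: "wcf (s1*a1 + s2*a2) (s1*b1 + s2*b2) c d ws (s1*p1 + s2*p2, s1*q1 + s2*q2) =
   (s1 * fst (wcf a1 b1 c d ws (p1,q1)) + s2 * fst (wcf a2 b2 c d ws (p2,q2)),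
    s1 * snd (wcf a1 b1 c d ws (p1,q1)) + s2 * snd (wcf a2 b2 c d ws (p2,q2)))"
proof (induction ws)
  case Nil then show ?case by (simp add: wcf_Nil)
next
  case (Cons t ws)
  show ?case
  proof (cases t)
    case True then show ?thesis using Cons by (simp add: wcf_T Let_def algebra_simps)
  next
    case False then show ?thesis using Cons by (simp add: wcf_F Let_def algebra_simps)
  qed
qed

lemma wcf_zero: "wcf a b c d ws (0,0) =
   (a * fst (wcf 1 0 c d ws (0,0)) + b * fst (wcf 0 1 c d ws (0,0)),
    a * snd (wcf 1 0 c d ws (0,0)) + b * snd (wcf 0 1 c d ws (0,0)))"
  using wcf_lin[of a 1 b 0 0 1 c d ws 0 0 0 0] by simp

lemma length_dih: "length (dih m) = 2 * m"
  by (simp add: dih_def)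

lemma step_b:
  assumes "be \<noteq> 0"
  shows "refl be (x + p *\<^sub>R be + q *\<^sub>R ga) =
    x + fst (sbF (2 * (x \<bullet> be) / (be \<bullet> be)) (2 * (be \<bullet> ga) / (be \<bullet> be)) (p, q)) *\<^sub>R be
      + snd (sbF (2 * (x \<bullet> be) / (be \<bullet> be)) (2 * (be \<bullet> ga) / (be \<bullet> be)) (p, q)) *\<^sub>R ga"
proof -
  have bb: "be \<bullet> be \<noteq> 0" using assms by simp
  have "2 * ((x + p *\<^sub>R be + q *\<^sub>R ga) \<bullet> be) / (be \<bullet> be)
      = 2 * (x \<bullet> be) / (be \<bullet> be) + 2 * p + q * (2 * (be \<bullet> ga) / (be \<bullet> be))"
    using bb by (simp add: inner_add_left inner_add_right inner_commute field_simps)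
  then show ?thesis unfolding refl_def sbF_def
    by (simp add: algebra_simps) (metis mult.commute mult_2 scaleR_add_left)
qed

lemma step_g:
  assumes "ga \<noteq> 0"
  shows "refl ga (x + p *\<^sub>R be + q *\<^sub>R ga) =
    x + fst (sgF (2 * (x \<bullet> ga) / (ga \<bullet> ga)) (2 * (be \<bullet> ga) / (ga \<bullet> ga)) (p, q)) *\<^sub>R be
      + snd (sgF (2 * (x \<bullet> ga) / (ga \<bullet> ga)) (2 * (be \<bullet> ga) / (ga \<bullet> ga)) (p, q)) *\<^sub>R ga"
proof -
  have gg: "ga \<bullet> ga \<noteq> 0" using assms by simp
  have "2 * ((x + p *\<^sub>R be + q *\<^sub>R ga) \<bullet> ga) / (ga \<bullet> ga)
      = 2 * (x \<bullet> ga) / (ga \<bullet> ga) + 2 * q + p * (2 * (be \<bullet> ga) / (ga \<bullet> ga))"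
    using gg by (simp add: inner_add_left inner_add_right inner_commute field_simps)
  then show ?thesis unfolding refl_def sgF_def
    by (simp add: algebra_simps) (metis mult.commute mult_2 scaleR_add_left)
qed

lemma wmap_coef:
  assumes "be \<noteq> 0" "ga \<noteq> 0"
  shows "wmap be ga ws (x + p *\<^sub>R be + q *\<^sub>R ga) =
    x + fst (wcf (2 * (x \<bullet> be) / (be \<bullet> be)) (2 * (x \<bullet> ga) / (ga \<bullet> ga))
              (2 * (be \<bullet> ga) / (ga \<bullet> ga)) (2 * (be \<bullet> ga) / (be \<bullet> be)) ws (p, q)) *\<^sub>R be
      + snd (wcf (2 * (x \<bullet> be) / (be \<bullet> be)) (2 * (x \<bullet> ga) / (ga \<bullet> ga))
              (2 * (be \<bullet> ga) / (ga \<bullet> ga)) (2 * (be \<bullet> ga) / (be \<bullet> be)) ws (p, q)) *\<^sub>R ga"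
proof (induction ws)
  case Nil then show ?case by (simp add: wmap_def wcf_def)
next
  case (Cons t ws)
  have e1: "wmap be ga (t # ws) = (if t then refl be else refl ga) \<circ> wmap be ga ws"
    by (simp add: wmap_def)
  have e2: "\<And>a b c d. wcf a b c d (t # ws) (p, q) = (if t then sbF a d else sgF b c) (wcf a b c d ws (p, q))"
    by (simp add: wcf_def)
  show ?case
    using Cons step_b[OF assms(1)] step_g[OF assms(2)]
    unfolding e1 e2 by (cases t) (simp_all del: sbF_def sgF_def add: prod.collapse)
qed

lemma wmap_in: "be \<in> \<Phi> \<Longrightarrow> ga \<in> \<Phi> \<Longrightarrow> wmap be ga ws \<in> weyl_group \<Phi>"
  by (induction ws) (auto simp: wmap_def intro: weyl_group.intros)

lemma funpow_rw: "(refl be \<circ> refl ga) ^^ k = wmap be ga (rw k)"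
  by (induction k) (simp_all add: rw_def wmap_def comp_assoc)

lemma count_lemma:
  assumes fin: "finite W" and uW: "\<And>u. u \<in> set us \<Longrightarrow> u \<in> W"
    and inv: "\<And>u. u \<in> W \<Longrightarrow> \<exists>u'\<in>W. u' \<circ> u = id \<and> u \<circ> u' = id"
    and comp: "\<And>u w. u \<in> W \<Longrightarrow> w \<in> W \<Longrightarrow> w \<circ> u \<in> W"
    and SW: "S \<subseteq> W"
    and K: "\<And>w. w \<in> W \<Longrightarrow> length (filter (\<lambda>u. w \<circ> u \<in> S) us) = k"
  shows "length us * card S = card W * k"
proof -
  have each: "card {w \<in> W. w \<circ> u \<in> S} = card S" if u: "u \<in> W" for u
  proof -
    obtain u' where u': "u' \<in> W" "u' \<circ> u = id" "u \<circ> u' = id" using inv[OF u] by blast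
    have "bij_betw (\<lambda>w. w \<circ> u) {w \<in> W. w \<circ> u \<in> S} S"
    proof (rule bij_betw_imageI)
      show "inj_on (\<lambda>w. w \<circ> u) {w \<in> W. w \<circ> u \<in> S}"
      proof (rule inj_onI)
        fix w1 w2 assume "w1 \<circ> u = w2 \<circ> u"
        then have "w1 \<circ> u \<circ> u' = w2 \<circ> u \<circ> u'" by simp
        then show "w1 = w2" using u'(3) by (simp add: comp_assoc)
      qed
      show "(\<lambda>w. w \<circ> u) ` {w \<in> W. w \<circ> u \<in> S} = S"
      proof
        show "(\<lambda>w. w \<circ> u) ` {w \<in> W. w \<circ> u \<in> S} \<subseteq> S" by blast
        show "S \<subseteq> (\<lambda>w. w \<circ> u) ` {w \<in> W. w \<circ> u \<in> S}"
        proof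
          fix s assume s: "s \<in> S"
          have "s \<circ> u' \<in> W" using comp[OF u'(1)] SW s by blast
          moreover have "(s \<circ> u') \<circ> u = s" using u'(2) by (simp add: comp_assoc)
          ultimately show "s \<in> (\<lambda>w. w \<circ> u) ` {w \<in> W. w \<circ> u \<in> S}"
            using s by (metis (mono_tags, lifting) image_eqI mem_Collect_eq)
        qed
      qed
    qed
    then show ?thesis by (rule bij_betw_same_card)
  qed
  let ?n = "length us"
  have "(\<Sum>i<?n. card {w \<in> W. w \<circ> us ! i \<in> S}) = (\<Sum>i<?n. card S)"
  proof (rule sum.cong[OF refl])
    fix i assume "i \<in> {..<?n}"
    then have "us ! i \<in> W" using uW nth_mem by blast
    then show "card {w \<in> W. w \<circ> us ! i \<in> S} = card S" by (rule each)
  qed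
  then have "?n * card S = (\<Sum>i<?n. card {w \<in> W. w \<circ> us ! i \<in> S})" by simp
  also have "\<dots> = (\<Sum>i<?n. \<Sum>w\<in>W. if w \<circ> us ! i \<in> S then 1 else 0)"
  proof (rule sum.cong[OF refl])
    fix i
    show "card {w \<in> W. w \<circ> us ! i \<in> S} = (\<Sum>w\<in>W. if w \<circ> us ! i \<in> S then 1 else 0)"
      using fin by (simp only: card_eq_sum sum.inter_filter)
  qed
  also have "\<dots> = (\<Sum>w\<in>W. \<Sum>i<?n. if w \<circ> us ! i \<in> S then 1 else 0)"
    by (rule sum.swap)
  also have "\<dots> = (\<Sum>w\<in>W. card {i. i < ?n \<and> w \<circ> us ! i \<in> S})"
  proof (rule sum.cong[OF refl])
    fix w
    have "{i. i < ?n \<and> w \<circ> us ! i \<in> S} = {i \<in> {..<?n}. w \<circ> us ! i \<in> S}" by auto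
    then show "(\<Sum>i<?n. if w \<circ> us ! i \<in> S then 1 else 0) = card {i. i < ?n \<and> w \<circ> us ! i \<in> S}"
      using sum.inter_filter[of "{..<?n}" "\<lambda>_. 1::nat" "\<lambda>i. w \<circ> us ! i \<in> S"]
      by (simp only: card_eq_sum) simp
  qed
  also have "\<dots> = (\<Sum>w\<in>W. k)"
  proof (rule sum.cong[OF refl])
    fix w assume "w \<in> W"
    then show "card {i. i < ?n \<and> w \<circ> us ! i \<in> S} = k"
      using K[of w] length_filter_conv_card[of "\<lambda>u. w \<circ> u \<in> S" us] by simp
  qed
  finally show ?thesis by simp
qed


definition kf :: "nat \<Rightarrow> real \<Rightarrow> bool \<Rightarrow> bool \<Rightarrow> nat" where
  "kf m c e f = (if c = 0 then 1 else if (e = f) = (c > 0) then m - 1 else 1)"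

definition good :: "nat \<Rightarrow> real \<Rightarrow> real \<Rightarrow> bool" where
  "good m c d \<longleftrightarrow> wcf 1 0 c d (rw m) (0,0) = (0,0) \<and> wcf 0 1 c d (rw m) (0,0) = (0,0) \<and>
     (\<forall>k \<in> set [1..<m]. wcf 0 0 c d (rw k) (1,0) \<noteq> (1,0)) \<and>
     (\<forall>A B. (\<forall>ws\<in>set (dih m). form c d A B (1,0) ws \<noteq> 0 \<and> form c d A B (0,1) ws \<noteq> 0)
        \<longrightarrow> (\<forall>e f. cnt m c d A B e f = kf m c e f))"

lemma len_filter_int: "int (length (filter P xs)) = sum_list (map (\<lambda>x. if P x then 1 else 0) xs)"
  by (induction xs) auto

lemma cnt_int: "cnt m c d A B e f = k \<longleftrightarrow> sum_list (map (\<lambda>ws. if sg e (form c d A B (1,0) ws) \<and> sg f (form c d A B (0,1) ws) then 1 else 0) (dih m)) = int k"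
  unfolding cnt_def len_filter_int[symmetric] by linarith

lemma cnt_same: "A \<noteq> 0 \<Longrightarrow> cnt 1 2 2 A A True True = 1 \<and> cnt 1 2 2 A A False False = 1"
  by (auto simp: cnt_def dih_def form_def wcf_def sbF_def sgF_def sg_def)

lemma rw_1: "rw 1 = [True,False]"
  by (simp add: rw_def eval_nat_numeral)

lemma rw_2: "rw 2 = [True,False,True,False]"
  by (simp add: rw_def eval_nat_numeral)

lemma rw_3: "rw 3 = [True,False,True,False,True,False]"
  by (simp add: rw_def eval_nat_numeral)

lemma rw_4: "rw 4 = [True,False,True,False,True,False,True,False]"
  by (simp add: rw_def eval_nat_numeral)

lemma rw_5: "rw 5 = [True,False,True,False,True,False,True,False,True,False]"
  by (simp add: rw_def eval_nat_numeral)

lemma rw_6: "rw 6 = [True,False,True,False,True,False,True,False,True,False,True,False]"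
  by (simp add: rw_def eval_nat_numeral)

lemma dih_2: "dih 2 = [[], [True], [False], [False,True]]"
  by (simp add: dih_def eval_nat_numeral upt_rec)

lemma dih_3: "dih 3 = [[], [True], [True,False], [False], [False,True], [False,True,False]]"
  by (simp add: dih_def eval_nat_numeral upt_rec)

lemma dih_4: "dih 4 = [[], [True], [True,False], [True,False,True], [False], [False,True], [False,True,False], [False,True,False,True]]"
  by (simp add: dih_def eval_nat_numeral upt_rec)

lemma dih_6: "dih 6 = [[], [True], [True,False], [True,False,True], [True,False,True,False], [True,False,True,False,True], [False], [False,True], [False,True,False], [False,True,False,True], [False,True,False,True,False], [False,True,False,True,False,True]]"
  by (simp add: dih_def eval_nat_numeral upt_rec)
lemma good_0_0: "good 2 0 0"
  unfolding good_def
proof (intro conjI allI impI ballI)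
  show "wcf 1 0 0 0 (rw 2) (0,0) = (0,0)"
    unfolding rw_2 by (simp add: wcf_Nil wcf_T wcf_F Let_def)
  show "wcf 0 1 0 0 (rw 2) (0,0) = (0,0)"
    unfolding rw_2 by (simp add: wcf_Nil wcf_T wcf_F Let_def)
next
  fix k assume "k \<in> set [1..<2]"
  then have "k = 1" by auto
  moreover have "wcf 0 0 0 0 (rw 1) (1,0) \<noteq> (1,0)"
    unfolding rw_1 by (simp add: wcf_Nil wcf_T wcf_F Let_def)
  ultimately show "wcf 0 0 0 0 (rw k) (1,0) \<noteq> (1,0)" by blast
next
  fix A B :: real and e f :: bool
  assume R: "\<forall>ws\<in>set (dih 2). form 0 0 A B (1,0) ws \<noteq> 0 \<and> form 0 0 A B (0,1) ws \<noteq> 0"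
  have "cnt 2 0 0 A B True True = kf 2 0 True True"
    using R unfolding cnt_int dih_2 kf_def
    apply (simp add: form_def wcf_Nil wcf_T wcf_F Let_def sg_def split del: if_split)
    apply (smt (verit))?
    done
  moreover have "cnt 2 0 0 A B True False = kf 2 0 True False"
    using R unfolding cnt_int dih_2 kf_def
    apply (simp add: form_def wcf_Nil wcf_T wcf_F Let_def sg_def split del: if_split)
    apply (smt (verit))?
    done
  moreover have "cnt 2 0 0 A B False True = kf 2 0 False True"
    using R unfolding cnt_int dih_2 kf_def
    apply (simp add: form_def wcf_Nil wcf_T wcf_F Let_def sg_def split del: if_split)
    apply (smt (verit))?
    done
  moreover have "cnt 2 0 0 A B False False = kf 2 0 False False"
    using R unfolding cnt_int dih_2 kf_def
    apply (simp add: form_def wcf_Nil wcf_T wcf_F Let_def sg_def split del: if_split)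
    apply (smt (verit))?
    done
  ultimately show "cnt 2 0 0 A B e f = kf 2 0 e f"
    by (cases e; cases f) simp_all
qed

lemma good_1_1: "good 3 1 1"
  unfolding good_def
proof (intro conjI allI impI ballI)
  show "wcf 1 0 1 1 (rw 3) (0,0) = (0,0)"
    unfolding rw_3 by (simp add: wcf_Nil wcf_T wcf_F Let_def)
  show "wcf 0 1 1 1 (rw 3) (0,0) = (0,0)"
    unfolding rw_3 by (simp add: wcf_Nil wcf_T wcf_F Let_def)
next
  fix k assume "k \<in> set [1..<3]"
  then have "k = 1 \<or> k = 2" by auto
  moreover have "wcf 0 0 1 1 (rw 1) (1,0) \<noteq> (1,0)"
    unfolding rw_1 by (simp add: wcf_Nil wcf_T wcf_F Let_def)
  moreover have "wcf 0 0 1 1 (rw 2) (1,0) \<noteq> (1,0)"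
    unfolding rw_2 by (simp add: wcf_Nil wcf_T wcf_F Let_def)
  ultimately show "wcf 0 0 1 1 (rw k) (1,0) \<noteq> (1,0)" by blast
next
  fix A B :: real and e f :: bool
  assume R: "\<forall>ws\<in>set (dih 3). form 1 1 A B (1,0) ws \<noteq> 0 \<and> form 1 1 A B (0,1) ws \<noteq> 0"
  have "cnt 3 1 1 A B True True = kf 3 1 True True"
    using R unfolding cnt_int dih_3 kf_def
    apply (simp add: form_def wcf_Nil wcf_T wcf_F Let_def sg_def split del: if_split)
    apply (smt (verit))?
    done
  moreover have "cnt 3 1 1 A B True False = kf 3 1 True False"
    using R unfolding cnt_int dih_3 kf_def
    apply (simp add: form_def wcf_Nil wcf_T wcf_F Let_def sg_def split del: if_split)
    apply (smt (verit))?
    done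
  moreover have "cnt 3 1 1 A B False True = kf 3 1 False True"
    using R unfolding cnt_int dih_3 kf_def
    apply (simp add: form_def wcf_Nil wcf_T wcf_F Let_def sg_def split del: if_split)
    apply (smt (verit))?
    done
  moreover have "cnt 3 1 1 A B False False = kf 3 1 False False"
    using R unfolding cnt_int dih_3 kf_def
    apply (simp add: form_def wcf_Nil wcf_T wcf_F Let_def sg_def split del: if_split)
    apply (smt (verit))?
    done
  ultimately show "cnt 3 1 1 A B e f = kf 3 1 e f"
    by (cases e; cases f) simp_all
qed

lemma good_m1_m1: "good 3 (- 1) (- 1)"
  unfolding good_def
proof (intro conjI allI impI ballI)
  show "wcf 1 0 (- 1) (- 1) (rw 3) (0,0) = (0,0)"
    unfolding rw_3 by (simp add: wcf_Nil wcf_T wcf_F Let_def)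
  show "wcf 0 1 (- 1) (- 1) (rw 3) (0,0) = (0,0)"
    unfolding rw_3 by (simp add: wcf_Nil wcf_T wcf_F Let_def)
next
  fix k assume "k \<in> set [1..<3]"
  then have "k = 1 \<or> k = 2" by auto
  moreover have "wcf 0 0 (- 1) (- 1) (rw 1) (1,0) \<noteq> (1,0)"
    unfolding rw_1 by (simp add: wcf_Nil wcf_T wcf_F Let_def)
  moreover have "wcf 0 0 (- 1) (- 1) (rw 2) (1,0) \<noteq> (1,0)"
    unfolding rw_2 by (simp add: wcf_Nil wcf_T wcf_F Let_def)
  ultimately show "wcf 0 0 (- 1) (- 1) (rw k) (1,0) \<noteq> (1,0)" by blast
next
  fix A B :: real and e f :: bool
  assume R: "\<forall>ws\<in>set (dih 3). form (- 1) (- 1) A B (1,0) ws \<noteq> 0 \<and> form (- 1) (- 1) A B (0,1) ws \<noteq> 0"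
  have "cnt 3 (- 1) (- 1) A B True True = kf 3 (- 1) True True"
    using R unfolding cnt_int dih_3 kf_def
    apply (simp add: form_def wcf_Nil wcf_T wcf_F Let_def sg_def split del: if_split)
    apply (smt (verit))?
    done
  moreover have "cnt 3 (- 1) (- 1) A B True False = kf 3 (- 1) True False"
    using R unfolding cnt_int dih_3 kf_def
    apply (simp add: form_def wcf_Nil wcf_T wcf_F Let_def sg_def split del: if_split)
    apply (smt (verit))?
    done
  moreover have "cnt 3 (- 1) (- 1) A B False True = kf 3 (- 1) False True"
    using R unfolding cnt_int dih_3 kf_def
    apply (simp add: form_def wcf_Nil wcf_T wcf_F Let_def sg_def split del: if_split)
    apply (smt (verit))?
    done
  moreover have "cnt 3 (- 1) (- 1) A B False False = kf 3 (- 1) False False"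
    using R unfolding cnt_int dih_3 kf_def
    apply (simp add: form_def wcf_Nil wcf_T wcf_F Let_def sg_def split del: if_split)
    apply (smt (verit))?
    done
  ultimately show "cnt 3 (- 1) (- 1) A B e f = kf 3 (- 1) e f"
    by (cases e; cases f) simp_all
qed

lemma good_1_2: "good 4 1 2"
  unfolding good_def
proof (intro conjI allI impI ballI)
  show "wcf 1 0 1 2 (rw 4) (0,0) = (0,0)"
    unfolding rw_4 by (simp add: wcf_Nil wcf_T wcf_F Let_def)
  show "wcf 0 1 1 2 (rw 4) (0,0) = (0,0)"
    unfolding rw_4 by (simp add: wcf_Nil wcf_T wcf_F Let_def)
next
  fix k assume "k \<in> set [1..<4]"
  then have "k = 1 \<or> k = 2 \<or> k = 3" by auto
  moreover have "wcf 0 0 1 2 (rw 1) (1,0) \<noteq> (1,0)"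
    unfolding rw_1 by (simp add: wcf_Nil wcf_T wcf_F Let_def)
  moreover have "wcf 0 0 1 2 (rw 2) (1,0) \<noteq> (1,0)"
    unfolding rw_2 by (simp add: wcf_Nil wcf_T wcf_F Let_def)
  moreover have "wcf 0 0 1 2 (rw 3) (1,0) \<noteq> (1,0)"
    unfolding rw_3 by (simp add: wcf_Nil wcf_T wcf_F Let_def)
  ultimately show "wcf 0 0 1 2 (rw k) (1,0) \<noteq> (1,0)" by blast
next
  fix A B :: real and e f :: bool
  assume R: "\<forall>ws\<in>set (dih 4). form 1 2 A B (1,0) ws \<noteq> 0 \<and> form 1 2 A B (0,1) ws \<noteq> 0"
  have "cnt 4 1 2 A B True True = kf 4 1 True True"
    using R unfolding cnt_int dih_4 kf_def
    apply (simp add: form_def wcf_Nil wcf_T wcf_F Let_def sg_def split del: if_split)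
    apply (smt (verit))?
    done
  moreover have "cnt 4 1 2 A B True False = kf 4 1 True False"
    using R unfolding cnt_int dih_4 kf_def
    apply (simp add: form_def wcf_Nil wcf_T wcf_F Let_def sg_def split del: if_split)
    apply (smt (verit))?
    done
  moreover have "cnt 4 1 2 A B False True = kf 4 1 False True"
    using R unfolding cnt_int dih_4 kf_def
    apply (simp add: form_def wcf_Nil wcf_T wcf_F Let_def sg_def split del: if_split)
    apply (smt (verit))?
    done
  moreover have "cnt 4 1 2 A B False False = kf 4 1 False False"
    using R unfolding cnt_int dih_4 kf_def
    apply (simp add: form_def wcf_Nil wcf_T wcf_F Let_def sg_def split del: if_split)
    apply (smt (verit))?
    done
  ultimately show "cnt 4 1 2 A B e f = kf 4 1 e f"
    by (cases e; cases f) simp_all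
qed

lemma good_m1_m2: "good 4 (- 1) (- 2)"
  unfolding good_def
proof (intro conjI allI impI ballI)
  show "wcf 1 0 (- 1) (- 2) (rw 4) (0,0) = (0,0)"
    unfolding rw_4 by (simp add: wcf_Nil wcf_T wcf_F Let_def)
  show "wcf 0 1 (- 1) (- 2) (rw 4) (0,0) = (0,0)"
    unfolding rw_4 by (simp add: wcf_Nil wcf_T wcf_F Let_def)
next
  fix k assume "k \<in> set [1..<4]"
  then have "k = 1 \<or> k = 2 \<or> k = 3" by auto
  moreover have "wcf 0 0 (- 1) (- 2) (rw 1) (1,0) \<noteq> (1,0)"
    unfolding rw_1 by (simp add: wcf_Nil wcf_T wcf_F Let_def)
  moreover have "wcf 0 0 (- 1) (- 2) (rw 2) (1,0) \<noteq> (1,0)"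
    unfolding rw_2 by (simp add: wcf_Nil wcf_T wcf_F Let_def)
  moreover have "wcf 0 0 (- 1) (- 2) (rw 3) (1,0) \<noteq> (1,0)"
    unfolding rw_3 by (simp add: wcf_Nil wcf_T wcf_F Let_def)
  ultimately show "wcf 0 0 (- 1) (- 2) (rw k) (1,0) \<noteq> (1,0)" by blast
next
  fix A B :: real and e f :: bool
  assume R: "\<forall>ws\<in>set (dih 4). form (- 1) (- 2) A B (1,0) ws \<noteq> 0 \<and> form (- 1) (- 2) A B (0,1) ws \<noteq> 0"
  have "cnt 4 (- 1) (- 2) A B True True = kf 4 (- 1) True True"
    using R unfolding cnt_int dih_4 kf_def
    apply (simp add: form_def wcf_Nil wcf_T wcf_F Let_def sg_def split del: if_split)
    apply (smt (verit))?
    done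
  moreover have "cnt 4 (- 1) (- 2) A B True False = kf 4 (- 1) True False"
    using R unfolding cnt_int dih_4 kf_def
    apply (simp add: form_def wcf_Nil wcf_T wcf_F Let_def sg_def split del: if_split)
    apply (smt (verit))?
    done
  moreover have "cnt 4 (- 1) (- 2) A B False True = kf 4 (- 1) False True"
    using R unfolding cnt_int dih_4 kf_def
    apply (simp add: form_def wcf_Nil wcf_T wcf_F Let_def sg_def split del: if_split)
    apply (smt (verit))?
    done
  moreover have "cnt 4 (- 1) (- 2) A B False False = kf 4 (- 1) False False"
    using R unfolding cnt_int dih_4 kf_def
    apply (simp add: form_def wcf_Nil wcf_T wcf_F Let_def sg_def split del: if_split)
    apply (smt (verit))?
    done
  ultimately show "cnt 4 (- 1) (- 2) A B e f = kf 4 (- 1) e f"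
    by (cases e; cases f) simp_all
qed

lemma good_2_1: "good 4 2 1"
  unfolding good_def
proof (intro conjI allI impI ballI)
  show "wcf 1 0 2 1 (rw 4) (0,0) = (0,0)"
    unfolding rw_4 by (simp add: wcf_Nil wcf_T wcf_F Let_def)
  show "wcf 0 1 2 1 (rw 4) (0,0) = (0,0)"
    unfolding rw_4 by (simp add: wcf_Nil wcf_T wcf_F Let_def)
next
  fix k assume "k \<in> set [1..<4]"
  then have "k = 1 \<or> k = 2 \<or> k = 3" by auto
  moreover have "wcf 0 0 2 1 (rw 1) (1,0) \<noteq> (1,0)"
    unfolding rw_1 by (simp add: wcf_Nil wcf_T wcf_F Let_def)
  moreover have "wcf 0 0 2 1 (rw 2) (1,0) \<noteq> (1,0)"
    unfolding rw_2 by (simp add: wcf_Nil wcf_T wcf_F Let_def)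
  moreover have "wcf 0 0 2 1 (rw 3) (1,0) \<noteq> (1,0)"
    unfolding rw_3 by (simp add: wcf_Nil wcf_T wcf_F Let_def)
  ultimately show "wcf 0 0 2 1 (rw k) (1,0) \<noteq> (1,0)" by blast
next
  fix A B :: real and e f :: bool
  assume R: "\<forall>ws\<in>set (dih 4). form 2 1 A B (1,0) ws \<noteq> 0 \<and> form 2 1 A B (0,1) ws \<noteq> 0"
  have "cnt 4 2 1 A B True True = kf 4 2 True True"
    using R unfolding cnt_int dih_4 kf_def
    apply (simp add: form_def wcf_Nil wcf_T wcf_F Let_def sg_def split del: if_split)
    apply (smt (verit))?
    done
  moreover have "cnt 4 2 1 A B True False = kf 4 2 True False"
    using R unfolding cnt_int dih_4 kf_def
    apply (simp add: form_def wcf_Nil wcf_T wcf_F Let_def sg_def split del: if_split)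
    apply (smt (verit))?
    done
  moreover have "cnt 4 2 1 A B False True = kf 4 2 False True"
    using R unfolding cnt_int dih_4 kf_def
    apply (simp add: form_def wcf_Nil wcf_T wcf_F Let_def sg_def split del: if_split)
    apply (smt (verit))?
    done
  moreover have "cnt 4 2 1 A B False False = kf 4 2 False False"
    using R unfolding cnt_int dih_4 kf_def
    apply (simp add: form_def wcf_Nil wcf_T wcf_F Let_def sg_def split del: if_split)
    apply (smt (verit))?
    done
  ultimately show "cnt 4 2 1 A B e f = kf 4 2 e f"
    by (cases e; cases f) simp_all
qed

lemma good_m2_m1: "good 4 (- 2) (- 1)"
  unfolding good_def
proof (intro conjI allI impI ballI)
  show "wcf 1 0 (- 2) (- 1) (rw 4) (0,0) = (0,0)"
    unfolding rw_4 by (simp add: wcf_Nil wcf_T wcf_F Let_def)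
  show "wcf 0 1 (- 2) (- 1) (rw 4) (0,0) = (0,0)"
    unfolding rw_4 by (simp add: wcf_Nil wcf_T wcf_F Let_def)
next
  fix k assume "k \<in> set [1..<4]"
  then have "k = 1 \<or> k = 2 \<or> k = 3" by auto
  moreover have "wcf 0 0 (- 2) (- 1) (rw 1) (1,0) \<noteq> (1,0)"
    unfolding rw_1 by (simp add: wcf_Nil wcf_T wcf_F Let_def)
  moreover have "wcf 0 0 (- 2) (- 1) (rw 2) (1,0) \<noteq> (1,0)"
    unfolding rw_2 by (simp add: wcf_Nil wcf_T wcf_F Let_def)
  moreover have "wcf 0 0 (- 2) (- 1) (rw 3) (1,0) \<noteq> (1,0)"
    unfolding rw_3 by (simp add: wcf_Nil wcf_T wcf_F Let_def)
  ultimately show "wcf 0 0 (- 2) (- 1) (rw k) (1,0) \<noteq> (1,0)" by blast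
next
  fix A B :: real and e f :: bool
  assume R: "\<forall>ws\<in>set (dih 4). form (- 2) (- 1) A B (1,0) ws \<noteq> 0 \<and> form (- 2) (- 1) A B (0,1) ws \<noteq> 0"
  have "cnt 4 (- 2) (- 1) A B True True = kf 4 (- 2) True True"
    using R unfolding cnt_int dih_4 kf_def
    apply (simp add: form_def wcf_Nil wcf_T wcf_F Let_def sg_def split del: if_split)
    apply (smt (verit))?
    done
  moreover have "cnt 4 (- 2) (- 1) A B True False = kf 4 (- 2) True False"
    using R unfolding cnt_int dih_4 kf_def
    apply (simp add: form_def wcf_Nil wcf_T wcf_F Let_def sg_def split del: if_split)
    apply (smt (verit))?
    done
  moreover have "cnt 4 (- 2) (- 1) A B False True = kf 4 (- 2) False True"
    using R unfolding cnt_int dih_4 kf_def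
    apply (simp add: form_def wcf_Nil wcf_T wcf_F Let_def sg_def split del: if_split)
    apply (smt (verit))?
    done
  moreover have "cnt 4 (- 2) (- 1) A B False False = kf 4 (- 2) False False"
    using R unfolding cnt_int dih_4 kf_def
    apply (simp add: form_def wcf_Nil wcf_T wcf_F Let_def sg_def split del: if_split)
    apply (smt (verit))?
    done
  ultimately show "cnt 4 (- 2) (- 1) A B e f = kf 4 (- 2) e f"
    by (cases e; cases f) simp_all
qed

lemma good_1_3: "good 6 1 3"
  unfolding good_def
proof (intro conjI allI impI ballI)
  show "wcf 1 0 1 3 (rw 6) (0,0) = (0,0)"
    unfolding rw_6 by (simp add: wcf_Nil wcf_T wcf_F Let_def)
  show "wcf 0 1 1 3 (rw 6) (0,0) = (0,0)"
    unfolding rw_6 by (simp add: wcf_Nil wcf_T wcf_F Let_def)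
next
  fix k assume "k \<in> set [1..<6]"
  then have "k = 1 \<or> k = 2 \<or> k = 3 \<or> k = 4 \<or> k = 5" by auto
  moreover have "wcf 0 0 1 3 (rw 1) (1,0) \<noteq> (1,0)"
    unfolding rw_1 by (simp add: wcf_Nil wcf_T wcf_F Let_def)
  moreover have "wcf 0 0 1 3 (rw 2) (1,0) \<noteq> (1,0)"
    unfolding rw_2 by (simp add: wcf_Nil wcf_T wcf_F Let_def)
  moreover have "wcf 0 0 1 3 (rw 3) (1,0) \<noteq> (1,0)"
    unfolding rw_3 by (simp add: wcf_Nil wcf_T wcf_F Let_def)
  moreover have "wcf 0 0 1 3 (rw 4) (1,0) \<noteq> (1,0)"
    unfolding rw_4 by (simp add: wcf_Nil wcf_T wcf_F Let_def)
  moreover have "wcf 0 0 1 3 (rw 5) (1,0) \<noteq> (1,0)"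
    unfolding rw_5 by (simp add: wcf_Nil wcf_T wcf_F Let_def)
  ultimately show "wcf 0 0 1 3 (rw k) (1,0) \<noteq> (1,0)" by blast
next
  fix A B :: real and e f :: bool
  assume R: "\<forall>ws\<in>set (dih 6). form 1 3 A B (1,0) ws \<noteq> 0 \<and> form 1 3 A B (0,1) ws \<noteq> 0"
  have "cnt 6 1 3 A B True True = kf 6 1 True True"
    using R unfolding cnt_int dih_6 kf_def
    apply (simp add: form_def wcf_Nil wcf_T wcf_F Let_def sg_def split del: if_split)
    apply (smt (verit))?
    done
  moreover have "cnt 6 1 3 A B True False = kf 6 1 True False"
    using R unfolding cnt_int dih_6 kf_def
    apply (simp add: form_def wcf_Nil wcf_T wcf_F Let_def sg_def split del: if_split)
    apply (smt (verit))?
    done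
  moreover have "cnt 6 1 3 A B False True = kf 6 1 False True"
    using R unfolding cnt_int dih_6 kf_def
    apply (simp add: form_def wcf_Nil wcf_T wcf_F Let_def sg_def split del: if_split)
    apply (smt (verit))?
    done
  moreover have "cnt 6 1 3 A B False False = kf 6 1 False False"
    using R unfolding cnt_int dih_6 kf_def
    apply (simp add: form_def wcf_Nil wcf_T wcf_F Let_def sg_def split del: if_split)
    apply (smt (verit))?
    done
  ultimately show "cnt 6 1 3 A B e f = kf 6 1 e f"
    by (cases e; cases f) simp_all
qed

lemma good_m1_m3: "good 6 (- 1) (- 3)"
  unfolding good_def
proof (intro conjI allI impI ballI)
  show "wcf 1 0 (- 1) (- 3) (rw 6) (0,0) = (0,0)"
    unfolding rw_6 by (simp add: wcf_Nil wcf_T wcf_F Let_def)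
  show "wcf 0 1 (- 1) (- 3) (rw 6) (0,0) = (0,0)"
    unfolding rw_6 by (simp add: wcf_Nil wcf_T wcf_F Let_def)
next
  fix k assume "k \<in> set [1..<6]"
  then have "k = 1 \<or> k = 2 \<or> k = 3 \<or> k = 4 \<or> k = 5" by auto
  moreover have "wcf 0 0 (- 1) (- 3) (rw 1) (1,0) \<noteq> (1,0)"
    unfolding rw_1 by (simp add: wcf_Nil wcf_T wcf_F Let_def)
  moreover have "wcf 0 0 (- 1) (- 3) (rw 2) (1,0) \<noteq> (1,0)"
    unfolding rw_2 by (simp add: wcf_Nil wcf_T wcf_F Let_def)
  moreover have "wcf 0 0 (- 1) (- 3) (rw 3) (1,0) \<noteq> (1,0)"
    unfolding rw_3 by (simp add: wcf_Nil wcf_T wcf_F Let_def)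
  moreover have "wcf 0 0 (- 1) (- 3) (rw 4) (1,0) \<noteq> (1,0)"
    unfolding rw_4 by (simp add: wcf_Nil wcf_T wcf_F Let_def)
  moreover have "wcf 0 0 (- 1) (- 3) (rw 5) (1,0) \<noteq> (1,0)"
    unfolding rw_5 by (simp add: wcf_Nil wcf_T wcf_F Let_def)
  ultimately show "wcf 0 0 (- 1) (- 3) (rw k) (1,0) \<noteq> (1,0)" by blast
next
  fix A B :: real and e f :: bool
  assume R: "\<forall>ws\<in>set (dih 6). form (- 1) (- 3) A B (1,0) ws \<noteq> 0 \<and> form (- 1) (- 3) A B (0,1) ws \<noteq> 0"
  have "cnt 6 (- 1) (- 3) A B True True = kf 6 (- 1) True True"
    using R unfolding cnt_int dih_6 kf_def
    apply (simp add: form_def wcf_Nil wcf_T wcf_F Let_def sg_def split del: if_split)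
    apply (smt (verit))?
    done
  moreover have "cnt 6 (- 1) (- 3) A B True False = kf 6 (- 1) True False"
    using R unfolding cnt_int dih_6 kf_def
    apply (simp add: form_def wcf_Nil wcf_T wcf_F Let_def sg_def split del: if_split)
    apply (smt (verit))?
    done
  moreover have "cnt 6 (- 1) (- 3) A B False True = kf 6 (- 1) False True"
    using R unfolding cnt_int dih_6 kf_def
    apply (simp add: form_def wcf_Nil wcf_T wcf_F Let_def sg_def split del: if_split)
    apply (smt (verit))?
    done
  moreover have "cnt 6 (- 1) (- 3) A B False False = kf 6 (- 1) False False"
    using R unfolding cnt_int dih_6 kf_def
    apply (simp add: form_def wcf_Nil wcf_T wcf_F Let_def sg_def split del: if_split)
    apply (smt (verit))?
    done
  ultimately show "cnt 6 (- 1) (- 3) A B e f = kf 6 (- 1) e f"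
    by (cases e; cases f) simp_all
qed

lemma good_3_1: "good 6 3 1"
  unfolding good_def
proof (intro conjI allI impI ballI)
  show "wcf 1 0 3 1 (rw 6) (0,0) = (0,0)"
    unfolding rw_6 by (simp add: wcf_Nil wcf_T wcf_F Let_def)
  show "wcf 0 1 3 1 (rw 6) (0,0) = (0,0)"
    unfolding rw_6 by (simp add: wcf_Nil wcf_T wcf_F Let_def)
next
  fix k assume "k \<in> set [1..<6]"
  then have "k = 1 \<or> k = 2 \<or> k = 3 \<or> k = 4 \<or> k = 5" by auto
  moreover have "wcf 0 0 3 1 (rw 1) (1,0) \<noteq> (1,0)"
    unfolding rw_1 by (simp add: wcf_Nil wcf_T wcf_F Let_def)
  moreover have "wcf 0 0 3 1 (rw 2) (1,0) \<noteq> (1,0)"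
    unfolding rw_2 by (simp add: wcf_Nil wcf_T wcf_F Let_def)
  moreover have "wcf 0 0 3 1 (rw 3) (1,0) \<noteq> (1,0)"
    unfolding rw_3 by (simp add: wcf_Nil wcf_T wcf_F Let_def)
  moreover have "wcf 0 0 3 1 (rw 4) (1,0) \<noteq> (1,0)"
    unfolding rw_4 by (simp add: wcf_Nil wcf_T wcf_F Let_def)
  moreover have "wcf 0 0 3 1 (rw 5) (1,0) \<noteq> (1,0)"
    unfolding rw_5 by (simp add: wcf_Nil wcf_T wcf_F Let_def)
  ultimately show "wcf 0 0 3 1 (rw k) (1,0) \<noteq> (1,0)" by blast
next
  fix A B :: real and e f :: bool
  assume R: "\<forall>ws\<in>set (dih 6). form 3 1 A B (1,0) ws \<noteq> 0 \<and> form 3 1 A B (0,1) ws \<noteq> 0"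
  have "cnt 6 3 1 A B True True = kf 6 3 True True"
    using R unfolding cnt_int dih_6 kf_def
    apply (simp add: form_def wcf_Nil wcf_T wcf_F Let_def sg_def split del: if_split)
    apply (smt (verit))?
    done
  moreover have "cnt 6 3 1 A B True False = kf 6 3 True False"
    using R unfolding cnt_int dih_6 kf_def
    apply (simp add: form_def wcf_Nil wcf_T wcf_F Let_def sg_def split del: if_split)
    apply (smt (verit))?
    done
  moreover have "cnt 6 3 1 A B False True = kf 6 3 False True"
    using R unfolding cnt_int dih_6 kf_def
    apply (simp add: form_def wcf_Nil wcf_T wcf_F Let_def sg_def split del: if_split)
    apply (smt (verit))?
    done
  moreover have "cnt 6 3 1 A B False False = kf 6 3 False False"
    using R unfolding cnt_int dih_6 kf_def
    apply (simp add: form_def wcf_Nil wcf_T wcf_F Let_def sg_def split del: if_split)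
    apply (smt (verit))?
    done
  ultimately show "cnt 6 3 1 A B e f = kf 6 3 e f"
    by (cases e; cases f) simp_all
qed

lemma good_m3_m1: "good 6 (- 3) (- 1)"
  unfolding good_def
proof (intro conjI allI impI ballI)
  show "wcf 1 0 (- 3) (- 1) (rw 6) (0,0) = (0,0)"
    unfolding rw_6 by (simp add: wcf_Nil wcf_T wcf_F Let_def)
  show "wcf 0 1 (- 3) (- 1) (rw 6) (0,0) = (0,0)"
    unfolding rw_6 by (simp add: wcf_Nil wcf_T wcf_F Let_def)
next
  fix k assume "k \<in> set [1..<6]"
  then have "k = 1 \<or> k = 2 \<or> k = 3 \<or> k = 4 \<or> k = 5" by auto
  moreover have "wcf 0 0 (- 3) (- 1) (rw 1) (1,0) \<noteq> (1,0)"
    unfolding rw_1 by (simp add: wcf_Nil wcf_T wcf_F Let_def)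
  moreover have "wcf 0 0 (- 3) (- 1) (rw 2) (1,0) \<noteq> (1,0)"
    unfolding rw_2 by (simp add: wcf_Nil wcf_T wcf_F Let_def)
  moreover have "wcf 0 0 (- 3) (- 1) (rw 3) (1,0) \<noteq> (1,0)"
    unfolding rw_3 by (simp add: wcf_Nil wcf_T wcf_F Let_def)
  moreover have "wcf 0 0 (- 3) (- 1) (rw 4) (1,0) \<noteq> (1,0)"
    unfolding rw_4 by (simp add: wcf_Nil wcf_T wcf_F Let_def)
  moreover have "wcf 0 0 (- 3) (- 1) (rw 5) (1,0) \<noteq> (1,0)"
    unfolding rw_5 by (simp add: wcf_Nil wcf_T wcf_F Let_def)
  ultimately show "wcf 0 0 (- 3) (- 1) (rw k) (1,0) \<noteq> (1,0)" by blast
next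
  fix A B :: real and e f :: bool
  assume R: "\<forall>ws\<in>set (dih 6). form (- 3) (- 1) A B (1,0) ws \<noteq> 0 \<and> form (- 3) (- 1) A B (0,1) ws \<noteq> 0"
  have "cnt 6 (- 3) (- 1) A B True True = kf 6 (- 3) True True"
    using R unfolding cnt_int dih_6 kf_def
    apply (simp add: form_def wcf_Nil wcf_T wcf_F Let_def sg_def split del: if_split)
    apply (smt (verit))?
    done
  moreover have "cnt 6 (- 3) (- 1) A B True False = kf 6 (- 3) True False"
    using R unfolding cnt_int dih_6 kf_def
    apply (simp add: form_def wcf_Nil wcf_T wcf_F Let_def sg_def split del: if_split)
    apply (smt (verit))?
    done
  moreover have "cnt 6 (- 3) (- 1) A B False True = kf 6 (- 3) False True"
    using R unfolding cnt_int dih_6 kf_def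
    apply (simp add: form_def wcf_Nil wcf_T wcf_F Let_def sg_def split del: if_split)
    apply (smt (verit))?
    done
  moreover have "cnt 6 (- 3) (- 1) A B False False = kf 6 (- 3) False False"
    using R unfolding cnt_int dih_6 kf_def
    apply (simp add: form_def wcf_Nil wcf_T wcf_F Let_def sg_def split del: if_split)
    apply (smt (verit))?
    done
  ultimately show "cnt 6 (- 3) (- 1) A B e f = kf 6 (- 3) e f"
    by (cases e; cases f) simp_all
qed


lemma u_beta:
  assumes "be \<noteq> 0" "ga \<noteq> 0"
  shows "wmap be ga ws be = fst (wcf 0 0 (2 * (be \<bullet> ga) / (ga \<bullet> ga)) (2 * (be \<bullet> ga) / (be \<bullet> be)) ws (1,0)) *\<^sub>R be
     + snd (wcf 0 0 (2 * (be \<bullet> ga) / (ga \<bullet> ga)) (2 * (be \<bullet> ga) / (be \<bullet> be)) ws (1,0)) *\<^sub>R ga"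
  using wmap_coef[OF assms, of ws 0 1 0] by simp

lemma u_gamma:
  assumes "be \<noteq> 0" "ga \<noteq> 0"
  shows "wmap be ga ws ga = fst (wcf 0 0 (2 * (be \<bullet> ga) / (ga \<bullet> ga)) (2 * (be \<bullet> ga) / (be \<bullet> be)) ws (0,1)) *\<^sub>R be
     + snd (wcf 0 0 (2 * (be \<bullet> ga) / (ga \<bullet> ga)) (2 * (be \<bullet> ga) / (be \<bullet> be)) ws (0,1)) *\<^sub>R ga"
  using wmap_coef[OF assms, of ws 0 0 1] by simp

lemma sgn_mem:
  assumes r: "root_system \<Phi>" and Pd: "P = {a \<in> \<Phi>. a \<bullet> v > 0}" and X: "X \<in> \<Phi>"
  shows "((if e then X else - X) \<in> P) \<longleftrightarrow> sg e (X \<bullet> v)"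
  using X rs_neg[OF r X] unfolding Pd sg_def by auto

lemma countW:
  assumes r: "root_system \<Phi>" and Pd: "P = {a \<in> \<Phi>. a \<bullet> v > 0}"
    and reg: "\<forall>a\<in>\<Phi>. a \<bullet> v \<noteq> 0"
    and be: "be \<in> \<Phi>" and ga: "ga \<in> \<Phi>"
    and cdef: "c = 2 * (be \<bullet> ga) / (ga \<bullet> ga)" and ddef: "d = 2 * (be \<bullet> ga) / (be \<bullet> be)"
    and K: "\<And>A B. (be = ga \<longrightarrow> A = B) \<Longrightarrow>
       (\<forall>ws\<in>set (dih m). form c d A B (1,0) ws \<noteq> 0 \<and> form c d A B (0,1) ws \<noteq> 0) \<Longrightarrow>
       cnt m c d A B e f = k"
  shows "2 * m * card (Wsgn \<Phi> P e f be ga) = card (weyl_group \<Phi>) * k"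
proof -
  let ?W = "weyl_group \<Phi>"
  let ?S = "Wsgn \<Phi> P e f be ga"
  let ?us = "map (wmap be ga) (dih m)"
  have b0: "be \<noteq> 0" and g0: "ga \<noteq> 0" using rs_0[OF r] be ga by auto
  have z: "0 \<notin> \<Phi>" using rs_0[OF r] .
  have "length ?us * card ?S = card ?W * k"
  proof (rule count_lemma)
    show "finite ?W" by (rule weyl_finite[OF r])
    show "\<And>u. u \<in> set ?us \<Longrightarrow> u \<in> ?W" using wmap_in[OF be ga] by auto
    show "\<And>u. u \<in> ?W \<Longrightarrow> \<exists>u'\<in>?W. u' \<circ> u = id \<and> u \<circ> u' = id" using weyl_inv[OF r] by blast
    show "\<And>u w. u \<in> ?W \<Longrightarrow> w \<in> ?W \<Longrightarrow> w \<circ> u \<in> ?W" using weyl_comp by blast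
    show "?S \<subseteq> ?W" unfolding Wsgn_def by blast
    fix w assume w: "w \<in> ?W"
    define A where "A = w be \<bullet> v"
    define B where "B = w ga \<bullet> v"
    have lin: "linear w" using weyl_linear[OF w] .
    have inPhi: "w x \<in> \<Phi>" if "x \<in> \<Phi>" for x using weyl_perm[OF r w] that by blast
    have key: "(w \<circ> wmap be ga ws) \<in> ?S \<longleftrightarrow> sg e (form c d A B (1,0) ws) \<and> sg f (form c d A B (0,1) ws)"
      and regs: "form c d A B (1,0) ws \<noteq> 0 \<and> form c d A B (0,1) ws \<noteq> 0" for ws
    proof -
      let ?u = "wmap be ga ws"
      have uW: "?u \<in> ?W" by (rule wmap_in[OF be ga])
      have wuW: "w \<circ> ?u \<in> ?W" using weyl_comp[OF w uW] .
      have X1: "(w \<circ> ?u) be \<in> \<Phi>" and X2: "(w \<circ> ?u) ga \<in> \<Phi>"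
        using weyl_perm[OF r wuW] be ga by auto
      have lv: "w (p *\<^sub>R be + q *\<^sub>R ga) \<bullet> v = p * A + q * B" for p q
        using lin by (simp add: linear_add linear_scale A_def B_def inner_add_left)
      have e1: "(w \<circ> ?u) be \<bullet> v = form c d A B (1,0) ws"
        unfolding form_def comp_apply u_beta[OF b0 g0] cdef ddef lv by simp
      have e2: "(w \<circ> ?u) ga \<bullet> v = form c d A B (0,1) ws"
        unfolding form_def comp_apply u_gamma[OF b0 g0] cdef ddef lv by simp
      show "(w \<circ> ?u) \<in> ?S \<longleftrightarrow> sg e (form c d A B (1,0) ws) \<and> sg f (form c d A B (0,1) ws)"
        unfolding Wsgn_def using wuW sgn_mem[OF r Pd X1, of e] sgn_mem[OF r Pd X2, of f] e1 e2 by simp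
      show "form c d A B (1,0) ws \<noteq> 0 \<and> form c d A B (0,1) ws \<noteq> 0"
        using reg X1 X2 e1 e2 by metis
    qed
    have "length (filter (\<lambda>u. w \<circ> u \<in> ?S) ?us) = length (filter (\<lambda>ws. w \<circ> wmap be ga ws \<in> ?S) (dih m))"
      by (simp add: filter_map o_def)
    also have "\<dots> = cnt m c d A B e f"
      unfolding cnt_def using key by (metis (no_types, lifting) filter_cong)
    also have "\<dots> = k"
    proof (rule K)
      show "be = ga \<longrightarrow> A = B" by (simp add: A_def B_def)
      show "\<forall>ws\<in>set (dih m). form c d A B (1,0) ws \<noteq> 0 \<and> form c d A B (0,1) ws \<noteq> 0" using regs by blast
    qed
    finally show "length (filter (\<lambda>u. w \<circ> u \<in> ?S) ?us) = k" .
  qed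
  then show ?thesis by (simp add: length_dih)
qed


lemma par_root:
  assumes r: "root_system \<Phi>" and be: "be \<in> \<Phi>" and ga: "ga \<in> \<Phi>"
    and ne1: "be \<noteq> ga" and ne2: "be \<noteq> - ga" and eq: "ga = t *\<^sub>R be"
  shows False
proof -
  have "t = 1 \<or> t = -1" using rs_red[OF r be] eq ga by simp
  then show False using eq ne1 ne2 by auto
qed

lemma indep:
  assumes r: "root_system \<Phi>" and be: "be \<in> \<Phi>" and ga: "ga \<in> \<Phi>"
    and ne1: "be \<noteq> ga" and ne2: "be \<noteq> - ga" and eq: "p *\<^sub>R be + q *\<^sub>R ga = 0"
  shows "p = 0 \<and> q = 0"
proof -
  have b0: "be \<noteq> 0" using rs_0[OF r] be by auto
  have q0: "q = 0"
  proof (rule ccontr)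
    assume q: "q \<noteq> 0"
    have "ga = (- p / q) *\<^sub>R be"
    proof -
      have "q *\<^sub>R ga = - (p *\<^sub>R be)" using eq by (simp add: eq_neg_iff_add_eq_0 add.commute)
      then have "(1/q) *\<^sub>R (q *\<^sub>R ga) = (1/q) *\<^sub>R (- (p *\<^sub>R be))" by simp
      then show ?thesis using q by (simp add: divide_inverse)
    qed
    then show False using par_root[OF r be ga ne1 ne2] by blast
  qed
  then have "p *\<^sub>R be = 0" using eq by simp
  then show ?thesis using b0 q0 by simp
qed

lemma cs_strict:
  assumes r: "root_system \<Phi>" and be: "be \<in> \<Phi>" and ga: "ga \<in> \<Phi>"
    and ne1: "be \<noteq> ga" and ne2: "be \<noteq> - ga"
  shows "(be \<bullet> ga)^2 < (be \<bullet> be) * (ga \<bullet> ga)"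
proof -
  have b0: "be \<noteq> 0" using rs_0[OF r] be by auto
  have bb: "be \<bullet> be > 0" using b0 by simp
  define t where "t = (be \<bullet> ga) / (be \<bullet> be)"
  define z where "z = ga - t *\<^sub>R be"
  have "z \<noteq> 0"
  proof
    assume "z = 0"
    then have "ga = t *\<^sub>R be" by (simp add: z_def)
    then show False using par_root[OF r be ga ne1 ne2] by blast
  qed
  then have zz: "z \<bullet> z > 0" by simp
  have "z \<bullet> z = ga \<bullet> ga - (be \<bullet> ga)^2 / (be \<bullet> be)"
    using bb unfolding z_def t_def
    by (simp add: inner_diff_left inner_diff_right inner_commute field_simps power2_eq_square)
  then have "(be \<bullet> ga)^2 / (be \<bullet> be) < ga \<bullet> ga" using zz by linarith
  then show ?thesis using bb by (simp add: field_simps mult.commute)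
qed

lemma int_enum:
  fixes ci di :: int
  assumes "ci * di < 4" "0 \<le> ci * di" "ci = 0 \<longleftrightarrow> di = 0" "0 < ci \<longleftrightarrow> 0 < di"
  shows "(ci = 0 \<and> di = 0) \<or> (ci = 1 \<and> di = 1) \<or> (ci = -1 \<and> di = -1) \<or>
    (ci = 1 \<and> di = 2) \<or> (ci = -1 \<and> di = -2) \<or> (ci = 2 \<and> di = 1) \<or> (ci = -2 \<and> di = -1) \<or>
    (ci = 1 \<and> di = 3) \<or> (ci = -1 \<and> di = -3) \<or> (ci = 3 \<and> di = 1) \<or> (ci = -3 \<and> di = -1)"
proof (cases "ci = 0")
  case True then show ?thesis using assms by simp
next
  case False
  then have d0: "di \<noteq> 0" using assms by simp
  have "\<bar>ci\<bar> * 1 \<le> \<bar>ci\<bar> * \<bar>di\<bar>" using d0 by (intro mult_left_mono) auto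
  then have "\<bar>ci\<bar> \<le> \<bar>ci * di\<bar>" by (simp add: abs_mult)
  then have ca: "\<bar>ci\<bar> \<le> 3" using assms by simp
  have "1 * \<bar>di\<bar> \<le> \<bar>ci\<bar> * \<bar>di\<bar>" using False by (intro mult_right_mono) auto
  then have "\<bar>di\<bar> \<le> \<bar>ci * di\<bar>" by (simp add: abs_mult)
  then have da: "\<bar>di\<bar> \<le> 3" using assms by simp
  have "ci \<in> {-3..3}" using ca by auto
  then have "ci = -3 \<or> ci = -2 \<or> ci = -1 \<or> ci = 1 \<or> ci = 2 \<or> ci = 3" using False by auto
  moreover have "di = -3 \<or> di = -2 \<or> di = -1 \<or> di = 1 \<or> di = 2 \<or> di = 3" using da d0 by auto
  ultimately show ?thesis using assms(1,4) by (elim disjE; simp)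
qed

lemma good_exists:
  fixes ci di :: int
  assumes "ci * di < 4" "0 \<le> ci * di" "ci = 0 \<longleftrightarrow> di = 0" "0 < ci \<longleftrightarrow> 0 < di"
  shows "\<exists>m. good m (of_int ci) (of_int di) \<and> (ci = 0 \<longrightarrow> m = 2) \<and> (ci \<noteq> 0 \<longrightarrow> 3 \<le> m)"
  using int_enum[OF assms]
  apply (elim disjE)
  subgoal using good_0_0 by (intro exI[of _ 2]) simp
  subgoal using good_1_1 by (intro exI[of _ 3]) simp
  subgoal using good_m1_m1 by (intro exI[of _ 3]) simp
  subgoal using good_1_2 by (intro exI[of _ 4]) simp
  subgoal using good_m1_m2 by (intro exI[of _ 4]) simp
  subgoal using good_2_1 by (intro exI[of _ 4]) simp
  subgoal using good_m2_m1 by (intro exI[of _ 4]) simp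
  subgoal using good_1_3 by (intro exI[of _ 6]) simp
  subgoal using good_m1_m3 by (intro exI[of _ 6]) simp
  subgoal using good_3_1 by (intro exI[of _ 6]) simp
  subgoal using good_m3_m1 by (intro exI[of _ 6]) simp
  done


lemma ord_eq:
  assumes r: "root_system \<Phi>" and be: "be \<in> \<Phi>" and ga: "ga \<in> \<Phi>"
    and ne1: "be \<noteq> ga" and ne2: "be \<noteq> - ga"
    and cdef: "c = 2 * (be \<bullet> ga) / (ga \<bullet> ga)" and ddef: "d = 2 * (be \<bullet> ga) / (be \<bullet> be)"
    and g: "good m c d" and m2: "2 \<le> m"
  shows "ord_refl be ga = m"
proof -
  have b0: "be \<noteq> 0" and g0: "ga \<noteq> 0" using rs_0[OF r] be ga by auto
  have g1: "wcf 1 0 c d (rw m) (0,0) = (0,0)" and g2: "wcf 0 1 c d (rw m) (0,0) = (0,0)"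
    and g3: "\<And>k. k \<in> set [1..<m] \<Longrightarrow> wcf 0 0 c d (rw k) (1,0) \<noteq> (1,0)"
    using g unfolding good_def by blast+
  have gz: "wcf a b c d (rw m) (0,0) = (0,0)" for a b
    by (subst wcf_zero) (simp add: g1 g2)
  have rm: "(refl be \<circ> refl ga) ^^ m = id"
  proof
    fix x
    have "((refl be \<circ> refl ga) ^^ m) x = wmap be ga (rw m) (x + 0 *\<^sub>R be + 0 *\<^sub>R ga)"
      by (simp add: funpow_rw)
    also have "\<dots> = x" unfolding wmap_coef[OF b0 g0] cdef[symmetric] ddef[symmetric]
      by (simp add: gz)
    finally show "((refl be \<circ> refl ga) ^^ m) x = id x" by simp
  qed
  have nk: "(refl be \<circ> refl ga) ^^ k \<noteq> id" if k: "0 < k" "k < m" for k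
  proof
    assume h: "(refl be \<circ> refl ga) ^^ k = id"
    define p where "p = fst (wcf 0 0 c d (rw k) (1,0))"
    define q where "q = snd (wcf 0 0 c d (rw k) (1,0))"
    have "wmap be ga (rw k) be = be" using h by (simp add: funpow_rw[symmetric])
    then have "p *\<^sub>R be + q *\<^sub>R ga = be"
      unfolding u_beta[OF b0 g0] cdef[symmetric] ddef[symmetric] p_def q_def .
    then have "(p - 1) *\<^sub>R be + q *\<^sub>R ga = 0" by (simp add: algebra_simps)
    then have "p - 1 = 0 \<and> q = 0" by (rule indep[OF r be ga ne1 ne2])
    then have "wcf 0 0 c d (rw k) (1,0) = (1,0)" unfolding p_def q_def by (simp add: prod_eq_iff)
    moreover have "k \<in> set [1..<m]" using k by simp
    ultimately show False using g3 by blast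
  qed
  show ?thesis unfolding ord_refl_def
  proof (rule Least_equality)
    show "0 < m \<and> (refl be \<circ> refl ga) ^^ m = id" using m2 rm by simp
    fix y assume "0 < y \<and> (refl be \<circ> refl ga) ^^ y = id"
    then show "m \<le> y" using nk by (meson not_le)
  qed
qed

lemma cancelM: "0 < (M::nat) \<Longrightarrow> M * x = M * y \<Longrightarrow> x = y" by simp

theorem proposition3p5:
  fixes \<Phi> P :: "'a::euclidean_space set" and \<beta> \<gamma> :: 'a
  assumes "root_system \<Phi>" and "positive_system \<Phi> P"
    and "\<beta> \<in> P" and "\<gamma> \<in> P"
  shows "card (Wsgn \<Phi> P True True \<beta> \<gamma>) = card (Wsgn \<Phi> P False False \<beta> \<gamma>)
    \<and> card (Wsgn \<Phi> P True False \<beta> \<gamma>) = card (Wsgn \<Phi> P False True \<beta> \<gamma>)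
    \<and> (\<beta> \<noteq> \<gamma> \<longrightarrow>
         (\<beta> \<bullet> \<gamma> \<ge> 0 \<longrightarrow> card (Wsgn \<Phi> P True True \<beta> \<gamma>)
                          = (ord_refl \<beta> \<gamma> - 1) * card (Wsgn \<Phi> P True False \<beta> \<gamma>))
       \<and> (\<beta> \<bullet> \<gamma> \<le> 0 \<longrightarrow> card (Wsgn \<Phi> P True False \<beta> \<gamma>)
                          = (ord_refl \<beta> \<gamma> - 1) * card (Wsgn \<Phi> P True True \<beta> \<gamma>)))
    \<and> ((card (Wsgn \<Phi> P True True \<beta> \<gamma>) = card (Wsgn \<Phi> P False False \<beta> \<gamma>)
         \<and> card (Wsgn \<Phi> P False False \<beta> \<gamma>) = card (Wsgn \<Phi> P True False \<beta> \<gamma>)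
         \<and> card (Wsgn \<Phi> P True False \<beta> \<gamma>) = card (Wsgn \<Phi> P False True \<beta> \<gamma>))
       \<longleftrightarrow> \<beta> \<bullet> \<gamma> = 0)"
proof -
  note r = assms(1)
  obtain v where reg: "\<forall>a\<in>\<Phi>. a \<bullet> v \<noteq> 0" and Pd: "P = {a \<in> \<Phi>. a \<bullet> v > 0}"
    using assms(2) unfolding positive_system_def by blast
  have be: "\<beta> \<in> \<Phi>" and ga: "\<gamma> \<in> \<Phi>" and bv: "\<beta> \<bullet> v > 0" and gv: "\<gamma> \<bullet> v > 0"
    using assms(3,4) Pd by auto
  have b0: "\<beta> \<noteq> 0" and g0: "\<gamma> \<noteq> 0" using rs_0[OF r] be ga by auto
  have ne2: "\<beta> \<noteq> - \<gamma>" using bv gv by auto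
  let ?W = "weyl_group \<Phi>"
  let ?N = "card ?W"
  have Npos: "0 < ?N"
  proof -
    have "finite ?W" by (rule weyl_finite[OF r])
    moreover have "id \<in> ?W" by (rule weyl_group.weyl_id)
    ultimately show ?thesis by (simp add: card_gt_0_iff) blast
  qed
  let ?n = "\<lambda>e f. card (Wsgn \<Phi> P e f \<beta> \<gamma>)"
  show ?thesis
  proof (cases "\<beta> = \<gamma>")
    case True
    have c2: "2 = 2 * (\<beta> \<bullet> \<gamma>) / (\<gamma> \<bullet> \<gamma>)" and d2: "2 = 2 * (\<beta> \<bullet> \<gamma>) / (\<beta> \<bullet> \<beta>)"
      using True b0 by auto
    have K1: "cnt 1 2 2 A B e e = 1"
      if "\<beta> = \<gamma> \<longrightarrow> A = B" and R: "\<forall>ws\<in>set (dih 1). form 2 2 A B (1,0) ws \<noteq> 0 \<and> form 2 2 A B (0,1) ws \<noteq> 0"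
      for A B e
    proof -
      have AB: "A = B" using that True by simp
      have "[] \<in> set (dih 1)" by (simp add: dih_def)
      then have "form 2 2 A B (1,0) [] \<noteq> 0" using R by blast
      then have "A \<noteq> 0" by (simp add: form_def wcf_Nil)
      then show ?thesis using cnt_same[of A] AB by (cases e) auto
    qed
    have hTT: "2 * 1 * ?n True True = ?N * 1"
      by (rule countW[OF r Pd reg be ga c2 d2]) (rule K1)
    have hFF: "2 * 1 * ?n False False = ?N * 1"
      by (rule countW[OF r Pd reg be ga c2 d2]) (rule K1)
    have eTF: "Wsgn \<Phi> P True False \<beta> \<gamma> = {}" and eFT: "Wsgn \<Phi> P False True \<beta> \<gamma> = {}"
      unfolding Wsgn_def Pd using True by auto
    have bb: "\<beta> \<bullet> \<gamma> \<noteq> 0" using True b0 by simp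
    show ?thesis using hTT hFF eTF eFT Npos True bb by auto
  next
    case False
    note ne1 = False
    define c where "c = 2 * (\<beta> \<bullet> \<gamma>) / (\<gamma> \<bullet> \<gamma>)"
    define d where "d = 2 * (\<beta> \<bullet> \<gamma>) / (\<beta> \<bullet> \<beta>)"
    have bbp: "\<beta> \<bullet> \<beta> > 0" and ggp: "\<gamma> \<bullet> \<gamma> > 0" using b0 g0 by auto
    have "c \<in> \<int>" unfolding c_def using rs_int[OF r ga be] .
    then obtain ci where ci: "c = of_int ci" by (auto elim: Ints_cases)
    have "d \<in> \<int>" unfolding d_def using rs_int[OF r be ga] by (simp add: inner_commute)
    then obtain di where di: "d = of_int di" by (auto elim: Ints_cases)
    have cd: "c * d = 4 * (\<beta> \<bullet> \<gamma>)^2 / ((\<beta> \<bullet> \<beta>) * (\<gamma> \<bullet> \<gamma>))"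
      unfolding c_def d_def by (simp add: field_simps power2_eq_square)
    have cs: "(\<beta> \<bullet> \<gamma>)^2 < (\<beta> \<bullet> \<beta>) * (\<gamma> \<bullet> \<gamma>)" by (rule cs_strict[OF r be ga ne1 ne2])
    have "c * d < 4" using cs bbp ggp unfolding cd by (simp add: field_simps)
    then have i1: "ci * di < 4" unfolding ci di by (metis of_int_less_numeral_iff of_int_mult)
    have "c * d \<ge> 0" unfolding cd using bbp ggp by simp
    then have i2: "0 \<le> ci * di" unfolding ci di by (metis of_int_0_le_iff of_int_mult)
    have c0: "c = 0 \<longleftrightarrow> \<beta> \<bullet> \<gamma> = 0" and d0: "d = 0 \<longleftrightarrow> \<beta> \<bullet> \<gamma> = 0"
      unfolding c_def d_def using bbp ggp by auto
    have cp: "0 < c \<longleftrightarrow> 0 < \<beta> \<bullet> \<gamma>" and dp: "0 < d \<longleftrightarrow> 0 < \<beta> \<bullet> \<gamma>"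
    proof -
      have n1: "\<not> \<gamma> \<bullet> \<gamma> < 0" using inner_ge_zero[of \<gamma>] by linarith
      have n2: "\<not> \<beta> \<bullet> \<beta> < 0" using inner_ge_zero[of \<beta>] by linarith
      show "0 < c \<longleftrightarrow> 0 < \<beta> \<bullet> \<gamma>" "0 < d \<longleftrightarrow> 0 < \<beta> \<bullet> \<gamma>"
        unfolding c_def d_def using n1 n2 by (simp_all only: zero_less_divide_iff) (use bbp ggp in auto)
    qed
    have i3: "ci = 0 \<longleftrightarrow> di = 0" using c0 d0 ci di by simp
    have i4: "0 < ci \<longleftrightarrow> 0 < di" using cp dp ci di by simp
    obtain m where g: "good m c d" and m0: "ci = 0 \<longrightarrow> m = 2" and m3: "ci \<noteq> 0 \<longrightarrow> 3 \<le> m"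
      using good_exists[OF i1 i2 i3 i4] ci di by blast
    have m2: "2 \<le> m" using m0 m3 by linarith
    have ord: "ord_refl \<beta> \<gamma> = m" by (rule ord_eq[OF r be ga ne1 ne2 c_def d_def g m2])
    have g4: "\<And>A B e f. (\<forall>ws\<in>set (dih m). form c d A B (1,0) ws \<noteq> 0 \<and> form c d A B (0,1) ws \<noteq> 0)
        \<Longrightarrow> cnt m c d A B e f = kf m c e f"
      using g unfolding good_def by blast
    have H: "2 * m * ?n e f = ?N * kf m c e f" for e f
      by (rule countW[OF r Pd reg be ga c_def d_def]) (rule g4)
    have Mpos: "0 < 2 * m" using m2 by simp
    have cz: "c = 0 \<longleftrightarrow> ci = 0" using ci by simp
    consider (pos) "0 < \<beta> \<bullet> \<gamma>" | (zero) "\<beta> \<bullet> \<gamma> = 0" | (neg) "\<beta> \<bullet> \<gamma> < 0" by linarith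
    then show ?thesis
    proof cases
      case zero
      then have "c = 0" using c0 by simp
      then have m: "m = 2" using m0 cz by simp
      have k1: "kf m c e f = 1" for e f using \<open>c = 0\<close> by (simp add: kf_def)
      have all: "?n e f = ?n True True" for e f
        using H[of e f] H[of True True] k1 Mpos cancelM by metis
      have a1: "?n False False = ?n True True" and a2: "?n True False = ?n True True"
        and a3: "?n False True = ?n True True" using all by blast+
      show ?thesis unfolding a1 a2 a3 using zero m ord ne1 by simp
    next
      case pos
      then have cpos: "0 < c" using cp by simp
      then have m: "3 \<le> m" using m3 cz by simp
      have kTT: "kf m c True True = m - 1" and kFF: "kf m c False False = m - 1"
        and kTF: "kf m c True False = 1" and kFT: "kf m c False True = 1"
        using cpos by (auto simp: kf_def)
      have e1: "?n True True = ?n False False"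
        using H[of True True] H[of False False] kTT kFF Mpos cancelM by metis
      have e2: "?n True False = ?n False True"
        using H[of True False] H[of False True] kTF kFT Mpos cancelM by metis
      have "2 * m * ?n True True = 2 * m * ((m - 1) * ?n True False)"
        using H[of True True] H[of True False] kTT kTF by (simp add: algebra_simps)
      then have e3: "?n True True = (m - 1) * ?n True False" using Mpos cancelM by blast
      have ne: "?n False False \<noteq> ?n True False"
      proof
        assume "?n False False = ?n True False"
        then have "?N * (m - 1) = ?N * 1" using H[of False False] H[of True False] kFF kTF by metis
        then have "m - 1 = 1" using Npos by simp
        then show False using m by simp
      qed
      show ?thesis using e1 e2 e3 ne ord pos by auto
    next
      case neg
      have "2 * (\<beta> \<bullet> \<gamma>) < 0" using neg by simp
      then have cneg: "c < 0" unfolding c_def using ggp divide_neg_pos by blast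
      then have m: "3 \<le> m" using m3 cz by auto
      have kTT: "kf m c True True = 1" and kFF: "kf m c False False = 1"
        and kTF: "kf m c True False = m - 1" and kFT: "kf m c False True = m - 1"
        using cneg by (auto simp: kf_def)
      have e1: "?n True True = ?n False False"
        using H[of True True] H[of False False] kTT kFF Mpos cancelM by metis
      have e2: "?n True False = ?n False True"
        using H[of True False] H[of False True] kTF kFT Mpos cancelM by metis
      have "2 * m * ?n True False = 2 * m * ((m - 1) * ?n True True)"
        using H[of True True] H[of True False] kTT kTF by (simp add: algebra_simps)
      then have e3: "?n True False = (m - 1) * ?n True True" using Mpos cancelM by blast
      have ne: "?n False False \<noteq> ?n True False"
      proof
        assume "?n False False = ?n True False"
        then have "?N * 1 = ?N * (m - 1)" using H[of False False] H[of True False] kFF kTF by metis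
        then have "m - 1 = 1" using Npos by simp
        then show False using m by simp
      qed
      show ?thesis using e1 e2 e3 ne ord neg by auto
    qed
  qed
qed

end
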